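(* Let $n,d\in\mathbb{N}$, and let $\psi_1:\mathbb{R}^d\to\mathbb{C}$ and $\psi_2:\mathbb{R}^n\to\mathbb{C}$ be characteristic exponents of Lévy processes with Lévy triplets $(b_1,Q_1,\nu_1)$ and $(b_2,Q_2,\nu_2)$. Then \[ \{(x,y)\in\mathbb{R}^d\times\mathbb{R}^n\mid\psi_1(x)+\psi_2(y)=0\}=\{(x,y)\in\mathbb{R}^d\times\mathbb{R}^n\mid \psi_1(x)\in i\mathbb{R},\ \psi_2(y)\in i\mathbb{R},\ b_1^x+b_2^y=0\}. \]
   Context: A characteristic exponent with Lévy triplet $(b,Q,\nu)$ on $\mathbb{R}^k$ is $\psi(\xi)=-ib\cdot\xi+\tfrac12\xi\cdot Q\xi+\int_{0<|z|<1}(1-e^{iz\cdot\xi}+iz\cdot\xi)\nu(dz)+\int_{|z|\ge1}(1-e^{iz\cdot\xi})\nu(dz)$. For such a triplet and $x\in\mathbb{R}^k$, define $b^x:=x\cdot b+\int x\cdot z\big(\mathbf 1_{(0,1)}(|x\cdot z|)-\mathbf 1_{(0,1)}(|z|)\big)\nu(dz)$ (the drift of the one-dimensional Lévy process $x\cdot X_t$). Here $b_1^x$ is built from $(b_1,\nu_1)$ and $b_2^y$ from $(b_2,\nu_2)$. *)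

theory Defs
  imports "HOL-Analysis.Analysis"
begin

text \<open>Vectors of R^k are rendered as real^'k (k = CARD('k)); matrices as real^'k^'k.\<close>

definition levy_triplet :: "real^'k \<Rightarrow> real^'k^'k \<Rightarrow> (real^'k) measure \<Rightarrow> bool" where
  "levy_triplet b Q \<nu> \<longleftrightarrow>
     transpose Q = Q \<and> (\<forall>\<xi>. 0 \<le> \<xi> \<bullet> (Q *v \<xi>)) \<and>
     sets \<nu> = sets borel \<and> emeasure \<nu> {0} = 0 \<and>
     (\<integral>\<^sup>+ z. ennreal (min 1 ((norm z)\<^sup>2)) \<partial>\<nu>) < \<infinity>"

definition char_exponent :: "real^'k \<Rightarrow> real^'k^'k \<Rightarrow> (real^'k) measure \<Rightarrow> real^'k \<Rightarrow> complex" where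
  "char_exponent b Q \<nu> \<xi> =
     - \<i> * complex_of_real (b \<bullet> \<xi>) + complex_of_real ((\<xi> \<bullet> (Q *v \<xi>)) / 2)
     + (\<integral> z. indicator {z. 0 < norm z \<and> norm z < 1} z *\<^sub>R
              (1 - cis (z \<bullet> \<xi>) + \<i> * complex_of_real (z \<bullet> \<xi>)) \<partial>\<nu>)
     + (\<integral> z. indicator {z. 1 \<le> norm z} z *\<^sub>R (1 - cis (z \<bullet> \<xi>)) \<partial>\<nu>)"

text \<open>The drift b^x of the one-dimensional Levy process x.X_t;
  1_{(0,1)}(t) is the indicator of the open interval (0,1).\<close>
definition proj_drift :: "real^'k \<Rightarrow> (real^'k) measure \<Rightarrow> real^'k \<Rightarrow> real" where
  "proj_drift b \<nu> x =
     x \<bullet> b + (\<integral> z. (x \<bullet> z) * (indicator {0<..<1} \<bar>x \<bullet> z\<bar> - indicator {0<..<1} (norm z)) \<partial>\<nu>)"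

end

theory Submission
  imports Defs "HOL-Probability.Characteristic_Functions"
begin

lemma levy_meas:
  assumes "levy_triplet b Q \<nu>"
  shows "borel_measurable \<nu> = borel_measurable borel"
  using assms unfolding levy_triplet_def by (intro measurable_cong_sets) auto

lemma levy_int_min:
  assumes "levy_triplet b Q \<nu>"
  shows "integrable \<nu> (\<lambda>z. min 1 ((norm z)\<^sup>2))"
proof -
  have m: "(\<lambda>z. min 1 ((norm z)\<^sup>2)) \<in> borel_measurable \<nu>"
    unfolding levy_meas[OF assms] by measurable
  show ?thesis
    unfolding integrable_iff_bounded using m assms unfolding levy_triplet_def by simp
qed

lemma bound1:
  fixes z x :: "real^'k"
  shows "norm (indicator {z. 0 < norm z \<and> norm z < 1} z *\<^sub>R
              (1 - cis (z \<bullet> x) + \<i> * complex_of_real (z \<bullet> x)))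
     \<le> (norm x)\<^sup>2 / 2 * min 1 ((norm z)\<^sup>2)"
proof (cases "0 < norm z \<and> norm z < 1")
  case True
  let ?t = "z \<bullet> x"
  have "cmod (iexp ?t - (\<Sum>k \<le> 1. (\<i> * ?t)^k / fact k)) \<le> \<bar>?t\<bar>^2 / 2"
    using iexp_approx1[of ?t 1] by (simp add: numeral_2_eq_2)
  moreover have "(\<Sum>k \<le> (1::nat). (\<i> * ?t)^k / fact k) = 1 + \<i> * ?t" by simp
  moreover have "1 - cis ?t + \<i> * complex_of_real ?t = - (iexp ?t - (1 + \<i> * ?t))"
    by (simp add: cis_conv_exp)
  hence "cmod (1 - cis ?t + \<i> * complex_of_real ?t) = cmod (iexp ?t - (1 + \<i> * ?t))"
    by (metis norm_minus_cancel)
  moreover have "\<bar>?t\<bar> \<le> norm z * norm x" using Cauchy_Schwarz_ineq2 by blast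
  hence "\<bar>?t\<bar>^2 \<le> (norm z * norm x)^2" by (intro power_mono) auto
  moreover have "min 1 ((norm z)\<^sup>2) = (norm z)\<^sup>2" using True
    by (simp add: power_le_one)
  ultimately show ?thesis using True
    by (auto simp: power_mult_distrib mult.commute indicator_def)
next
  case False
  then show ?thesis by (auto simp add: indicator_def)
qed

lemma bound2:
  fixes z x :: "real^'k"
  shows "norm (indicator {z. 1 \<le> norm z} z *\<^sub>R (1 - cis (z \<bullet> x)))
     \<le> 2 * min 1 ((norm z)\<^sup>2)"
proof (cases "1 \<le> norm z")
  case True
  have "cmod (1 - cis (z \<bullet> x)) \<le> 1 + cmod (cis (z \<bullet> x))" using norm_triangle_ineq4[of 1 "cis (z \<bullet> x)"] by simp
  moreover have "min 1 ((norm z)\<^sup>2) = 1" using True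
    by (simp add: one_le_power)
  ultimately show ?thesis using True by (simp add: indicator_def)
next
  case False
  then show ?thesis by (auto simp add: indicator_def)
qed

lemma levy_parts:
  fixes x :: "real^'k"
  assumes L: "levy_triplet b Q \<nu>"
  defines "f1 \<equiv> \<lambda>z. indicator {z. 0 < norm z \<and> norm z < 1} z *\<^sub>R
              (1 - cis (z \<bullet> x) + \<i> * complex_of_real (z \<bullet> x))"
    and "f2 \<equiv> \<lambda>z. indicator {z. 1 \<le> norm z} z *\<^sub>R (1 - cis (z \<bullet> x))"
  shows "integrable \<nu> f1" "integrable \<nu> f2"
    "char_exponent b Q \<nu> x = - \<i> * complex_of_real (b \<bullet> x) + complex_of_real ((x \<bullet> (Q *v x)) / 2)
       + integral\<^sup>L \<nu> f1 + integral\<^sup>L \<nu> f2"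
    "\<And>z. Re (f1 z) = indicator {z. 0 < norm z \<and> norm z < 1} z * (1 - cos (z \<bullet> x))"
    "\<And>z. Re (f2 z) = indicator {z. 1 \<le> norm z} z * (1 - cos (z \<bullet> x))"
    "0 \<le> x \<bullet> (Q *v x)"
proof -
  have M: "borel_measurable \<nu> = borel_measurable borel" by (rule levy_meas[OF L])
  have I: "integrable \<nu> (\<lambda>z. min 1 ((norm z)\<^sup>2))" by (rule levy_int_min[OF L])
  have [measurable]: "(\<lambda>z. cis (z \<bullet> x)) \<in> borel_measurable borel"
    unfolding cis_conv_exp by (intro borel_measurable_continuous_onI continuous_intros)
  have [measurable]: "(\<lambda>z. \<i> * complex_of_real (z \<bullet> x)) \<in> borel_measurable borel"
    by (intro borel_measurable_continuous_onI continuous_intros)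
  have m1: "f1 \<in> borel_measurable \<nu>" unfolding M f1_def by measurable
  have m2: "f2 \<in> borel_measurable \<nu>" unfolding M f2_def by measurable
  show "integrable \<nu> f1"
  proof (rule Bochner_Integration.integrable_bound[OF _ m1])
    show "integrable \<nu> (\<lambda>z. (norm x)\<^sup>2 / 2 * min 1 ((norm z)\<^sup>2))" using I by simp
    show "AE z in \<nu>. norm (f1 z) \<le> norm ((norm x)\<^sup>2 / 2 * min 1 ((norm z)\<^sup>2))"
      using bound1[of z x for z] unfolding f1_def by (auto intro!: AE_I2)
  qed
  show "integrable \<nu> f2"
  proof (rule Bochner_Integration.integrable_bound[OF _ m2])
    show "integrable \<nu> (\<lambda>z. 2 * min 1 ((norm z)\<^sup>2))" using I by simp
    show "AE z in \<nu>. norm (f2 z) \<le> norm (2 * min 1 ((norm z)\<^sup>2))"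
      using bound2[of z x for z] unfolding f2_def by (auto intro!: AE_I2)
  qed
  show "char_exponent b Q \<nu> x = - \<i> * complex_of_real (b \<bullet> x) + complex_of_real ((x \<bullet> (Q *v x)) / 2)
       + integral\<^sup>L \<nu> f1 + integral\<^sup>L \<nu> f2"
    unfolding char_exponent_def f1_def f2_def by simp
  show "\<And>z. Re (f1 z) = indicator {z. 0 < norm z \<and> norm z < 1} z * (1 - cos (z \<bullet> x))"
    unfolding f1_def by simp
  show "\<And>z. Re (f2 z) = indicator {z. 1 \<le> norm z} z * (1 - cos (z \<bullet> x))"
    unfolding f2_def by simp
  show "0 \<le> x \<bullet> (Q *v x)" using L unfolding levy_triplet_def by blast
qed

lemma re_parts:
  fixes x :: "real^'k"
  assumes L: "levy_triplet b Q \<nu>"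
  defines "S1 \<equiv> {z::real^'k. 0 < norm z \<and> norm z < 1}" and "S2 \<equiv> {z::real^'k. 1 \<le> norm z}"
  shows "Re (char_exponent b Q \<nu> x) = (x \<bullet> (Q *v x)) / 2
     + (\<integral>z. indicator S1 z * (1 - cos (z \<bullet> x)) \<partial>\<nu>) + (\<integral>z. indicator S2 z * (1 - cos (z \<bullet> x)) \<partial>\<nu>)"
    "integrable \<nu> (\<lambda>z. indicator S1 z * (1 - cos (z \<bullet> x)))"
    "integrable \<nu> (\<lambda>z. indicator S2 z * (1 - cos (z \<bullet> x)))"
    "0 \<le> (\<integral>z. indicator S1 z * (1 - cos (z \<bullet> x)) \<partial>\<nu>)"
    "0 \<le> (\<integral>z. indicator S2 z * (1 - cos (z \<bullet> x)) \<partial>\<nu>)"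
    "0 \<le> x \<bullet> (Q *v x)"
proof -
  note P = levy_parts[OF L, of x]
  show i1: "integrable \<nu> (\<lambda>z. indicator S1 z * (1 - cos (z \<bullet> x)))"
    using integrable_Re[OF P(1)] by (simp add: S1_def)
  show i2: "integrable \<nu> (\<lambda>z. indicator S2 z * (1 - cos (z \<bullet> x)))"
    using integrable_Re[OF P(2)] by (simp add: S2_def)
  show "Re (char_exponent b Q \<nu> x) = (x \<bullet> (Q *v x)) / 2
     + (\<integral>z. indicator S1 z * (1 - cos (z \<bullet> x)) \<partial>\<nu>) + (\<integral>z. indicator S2 z * (1 - cos (z \<bullet> x)) \<partial>\<nu>)"
    unfolding P(3) using integral_Re[OF P(1)] integral_Re[OF P(2)]
    by (simp add: S1_def S2_def)
  show "0 \<le> (\<integral>z. indicator S1 z * (1 - cos (z \<bullet> x)) \<partial>\<nu>)"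
    by (intro integral_nonneg_AE AE_I2) (simp add: indicator_def)
  show "0 \<le> (\<integral>z. indicator S2 z * (1 - cos (z \<bullet> x)) \<partial>\<nu>)"
    by (intro integral_nonneg_AE AE_I2) (simp add: indicator_def)
  show "0 \<le> x \<bullet> (Q *v x)" by (rule P(6))
qed

lemma re_nonneg:
  assumes L: "levy_triplet b Q \<nu>"
  shows "0 \<le> Re (char_exponent b Q \<nu> x)"
  using re_parts[OF L, of x] by simp

lemma cos1_not_small:
  assumes "cos t = 1" shows "indicator {0<..<1::real} \<bar>t\<bar> = (0::real)"
proof -
  obtain n :: int where n: "t = real_of_int n * 2 * pi" using assms cos_one_2pi_int by blast
  have "\<not> (0 < \<bar>t\<bar> \<and> \<bar>t\<bar> < 1)"
  proof
    assume h: "0 < \<bar>t\<bar> \<and> \<bar>t\<bar> < 1"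
    hence "n \<noteq> 0" using n by auto
    hence "1 \<le> \<bar>real_of_int n\<bar>" by linarith
    hence "1 * (2 * pi) \<le> \<bar>real_of_int n\<bar> * (2 * pi)" by (intro mult_right_mono) auto
    moreover have "\<bar>t\<bar> = \<bar>real_of_int n\<bar> * (2 * pi)" using n by (simp add: abs_mult)
    ultimately show False using h pi_gt3 by linarith
  qed
  thus ?thesis by (simp add: indicator_def)
qed

lemma im_eq:
  fixes x :: "real^'k"
  assumes L: "levy_triplet b Q \<nu>" and R: "Re (char_exponent b Q \<nu> x) = 0"
  shows "Im (char_exponent b Q \<nu> x) = - proj_drift b \<nu> x"
proof -
  define S1 where "S1 = {z::real^'k. 0 < norm z \<and> norm z < 1}"
  define S2 where "S2 = {z::real^'k. 1 \<le> norm z}"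
  note RP = re_parts[OF L, of x, folded S1_def S2_def]
  note P = levy_parts[OF L, of x, folded S1_def S2_def]
  have z1: "(\<integral>z. indicator S1 z * (1 - cos (z \<bullet> x)) \<partial>\<nu>) = 0"
    and z2: "(\<integral>z. indicator S2 z * (1 - cos (z \<bullet> x)) \<partial>\<nu>) = 0"
    using RP R by linarith+
  have a1: "AE z in \<nu>. indicator S1 z * (1 - cos (z \<bullet> x)) = 0"
    using z1 integral_nonneg_eq_0_iff_AE[OF RP(2)] by (simp add: indicator_def)
  have a2: "AE z in \<nu>. indicator S2 z * (1 - cos (z \<bullet> x)) = 0"
    using z2 integral_nonneg_eq_0_iff_AE[OF RP(3)] by (simp add: indicator_def)
  have ac: "AE z in \<nu>. cos (z \<bullet> x) = 1"
    using a1 a2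
  proof eventually_elim
    case (elim z)
    show ?case
    proof (cases "z = 0")
      case False
      then show ?thesis using elim by (cases "norm z < 1") (auto simp: S1_def S2_def indicator_def)
    qed simp
  qed
  have cs: "cis (z \<bullet> x) = 1" if "cos (z \<bullet> x) = 1" for z
  proof -
    have "(sin (z \<bullet> x))\<^sup>2 = 0" using sin_cos_squared_add[of "z \<bullet> x"] that by simp
    thus ?thesis using that by (simp add: complex_eq_iff)
  qed
  have e1: "integral\<^sup>L \<nu> (\<lambda>z. indicator S1 z *\<^sub>R (1 - cis (z \<bullet> x) + \<i> * complex_of_real (z \<bullet> x)))
      = (\<integral>z. \<i> * complex_of_real (indicator S1 z * (z \<bullet> x)) \<partial>\<nu>)"
  proof (rule integral_cong_AE)
    show "(\<lambda>z. \<i> * complex_of_real (indicator S1 z * (z \<bullet> x))) \<in> borel_measurable \<nu>"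
      unfolding levy_meas[OF L] S1_def by measurable
    show "(\<lambda>z. indicator S1 z *\<^sub>R (1 - cis (z \<bullet> x) + \<i> * complex_of_real (z \<bullet> x))) \<in> borel_measurable \<nu>"
      using P(1) by (rule borel_measurable_integrable)
    show "AE z in \<nu>. indicator S1 z *\<^sub>R (1 - cis (z \<bullet> x) + \<i> * complex_of_real (z \<bullet> x)) =
      \<i> * complex_of_real (indicator S1 z * (z \<bullet> x))"
      using ac by eventually_elim (use cs in \<open>auto simp: indicator_def\<close>)
  qed
  have e2: "integral\<^sup>L \<nu> (\<lambda>z. indicator S2 z *\<^sub>R (1 - cis (z \<bullet> x))) = (\<integral>z. 0 \<partial>\<nu>)"
    by (rule integral_cong_AE[OF borel_measurable_integrable[OF P(2)]])
      (use ac cs in \<open>auto simp: indicator_def\<close>)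
  have e3: "(\<integral>z. (x \<bullet> z) * (indicator {0<..<1} \<bar>x \<bullet> z\<bar> - indicator {0<..<1} (norm z)) \<partial>\<nu>)
     = (\<integral>z. - (indicator S1 z * (z \<bullet> x)) \<partial>\<nu>)"
    by (rule integral_cong_AE) (use ac cos1_not_small in \<open>auto simp: levy_meas[OF L] S1_def indicator_def inner_commute\<close>)
  show ?thesis
    unfolding P(3) proj_drift_def e1 e2 e3 integral_mult_right_zero integral_minus integral_complex_of_real
    by (simp add: inner_commute)
qed

theorem lemma5p3:
  fixes b1 :: "real^'d" and Q1 :: "real^'d^'d" and \<nu>1 :: "(real^'d) measure"
    and b2 :: "real^'n" and Q2 :: "real^'n^'n" and \<nu>2 :: "(real^'n) measure"
  assumes "levy_triplet b1 Q1 \<nu>1" and "levy_triplet b2 Q2 \<nu>2"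
  shows "{(x, y). char_exponent b1 Q1 \<nu>1 x + char_exponent b2 Q2 \<nu>2 y = 0}
       = {(x, y). Re (char_exponent b1 Q1 \<nu>1 x) = 0 \<and> Re (char_exponent b2 Q2 \<nu>2 y) = 0
                 \<and> proj_drift b1 \<nu>1 x + proj_drift b2 \<nu>2 y = 0}"
proof (intro set_eqI iffI; clarsimp)
  fix x y
  assume h: "char_exponent b1 Q1 \<nu>1 x + char_exponent b2 Q2 \<nu>2 y = 0"
  have r: "Re (char_exponent b1 Q1 \<nu>1 x) + Re (char_exponent b2 Q2 \<nu>2 y) = 0"
    and i: "Im (char_exponent b1 Q1 \<nu>1 x) + Im (char_exponent b2 Q2 \<nu>2 y) = 0"
    using h by (simp_all add: complex_eq_iff)
  have r1: "Re (char_exponent b1 Q1 \<nu>1 x) = 0" and r2: "Re (char_exponent b2 Q2 \<nu>2 y) = 0"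
    using r re_nonneg[OF assms(1), of x] re_nonneg[OF assms(2), of y] by linarith+
  show "Re (char_exponent b1 Q1 \<nu>1 x) = 0 \<and> Re (char_exponent b2 Q2 \<nu>2 y) = 0 \<and>
        proj_drift b1 \<nu>1 x + proj_drift b2 \<nu>2 y = 0"
    using r1 r2 i im_eq[OF assms(1) r1] im_eq[OF assms(2) r2] by simp
next
  fix x y
  assume r1: "Re (char_exponent b1 Q1 \<nu>1 x) = 0" and r2: "Re (char_exponent b2 Q2 \<nu>2 y) = 0"
    and d: "proj_drift b1 \<nu>1 x + proj_drift b2 \<nu>2 y = 0"
  show "char_exponent b1 Q1 \<nu>1 x + char_exponent b2 Q2 \<nu>2 y = 0"
    using r1 r2 d im_eq[OF assms(1) r1] im_eq[OF assms(2) r2] by (simp add: complex_eq_iff)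
qed

end
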